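(* Let $r \ge t \ge 1$ be integers. If $M$ is a loopless rank-$r$ matroid with no $(t+1)$-claw, then $|E(M)| \ge 2r - t$. If equality holds, then $M$ is the direct sum of $r-t$ circuits and some number of coloops.
   Context: A claw of a matroid $M$ is a set that is both a flat and an independent set of $M$; a $k$-claw is a claw of size $k$. *)

theory Defs
  imports Main
begin

definition matroid :: "'a set \<Rightarrow> ('a set \<Rightarrow> bool) \<Rightarrow> bool" where
  "matroid E indep \<longleftrightarrow>
     finite E \<and> indep {} \<and>
     (\<forall>I. indep I \<longrightarrow> I \<subseteq> E) \<and>
     (\<forall>I J. indep J \<and> I \<subseteq> J \<longrightarrow> indep I) \<and>
     (\<forall>I J. indep I \<and> indep J \<and> card I < card J \<longrightarrow>
        (\<exists>x \<in> J - I. indep (insert x I)))"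

definition mrank :: "('a set \<Rightarrow> bool) \<Rightarrow> 'a set \<Rightarrow> nat" where
  "mrank indep X = Max (card ` {I. I \<subseteq> X \<and> indep I})"

definition matroid_rank :: "'a set \<Rightarrow> ('a set \<Rightarrow> bool) \<Rightarrow> nat" where
  "matroid_rank E indep = mrank indep E"

definition mclosure :: "'a set \<Rightarrow> ('a set \<Rightarrow> bool) \<Rightarrow> 'a set \<Rightarrow> 'a set" where
  "mclosure E indep X = {e \<in> E. mrank indep (insert e X) = mrank indep X}"

definition flat :: "'a set \<Rightarrow> ('a set \<Rightarrow> bool) \<Rightarrow> 'a set \<Rightarrow> bool" where
  "flat E indep X \<longleftrightarrow> X \<subseteq> E \<and> mclosure E indep X = X"

definition claw :: "'a set \<Rightarrow> ('a set \<Rightarrow> bool) \<Rightarrow> 'a set \<Rightarrow> bool" where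
  "claw E indep X \<longleftrightarrow> flat E indep X \<and> indep X"

definition loopless :: "'a set \<Rightarrow> ('a set \<Rightarrow> bool) \<Rightarrow> bool" where
  "loopless E indep \<longleftrightarrow> (\<forall>e \<in> E. indep {e})"

definition circuit :: "'a set \<Rightarrow> ('a set \<Rightarrow> bool) \<Rightarrow> 'a set \<Rightarrow> bool" where
  "circuit E indep C \<longleftrightarrow> C \<subseteq> E \<and> \<not> indep C \<and> (\<forall>x \<in> C. indep (C - {x}))"

text \<open>M is the direct sum of k circuits C 0, ..., C (k-1) (pairwise disjoint circuits of M)
  and a set K of coloops: the ground set is the disjoint union of the C i and K, and
  a set is independent iff it is independent in each summand, i.e. it is a subset of E
  containing none of the C i entirely (a circuit matroid on C has as independent sets
  exactly the proper subsets of C; a coloop is free).\<close>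
definition direct_sum_circuits_coloops ::
  "'a set \<Rightarrow> ('a set \<Rightarrow> bool) \<Rightarrow> nat \<Rightarrow> bool" where
  "direct_sum_circuits_coloops E indep k \<longleftrightarrow>
     (\<exists>(C :: nat \<Rightarrow> 'a set) (K :: 'a set).
        (\<forall>i<k. circuit E indep (C i)) \<and>
        (\<forall>i<k. \<forall>j<k. i \<noteq> j \<longrightarrow> C i \<inter> C j = {}) \<and>
        (\<forall>i<k. C i \<inter> K = {}) \<and>
        E = (\<Union>i<k. C i) \<union> K \<and>
        (\<forall>I. indep I \<longleftrightarrow> I \<subseteq> E \<and> (\<forall>i<k. \<not> C i \<subseteq> I)))"

end

theory Submission
  imports Defs
begin

definition fdc :: "('a set \<Rightarrow> bool) \<Rightarrow> 'a \<Rightarrow> 'a set \<Rightarrow> 'a set" where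
  "fdc indep e B = {b \<in> B. indep (insert e (B - {b}))}"

lemma m_finite: "matroid E indep \<Longrightarrow> finite E"
  unfolding matroid_def by blast
lemma m_sub: "matroid E indep \<Longrightarrow> indep I \<Longrightarrow> I \<subseteq> E"
  unfolding matroid_def by blast
lemma m_down: "matroid E indep \<Longrightarrow> indep J \<Longrightarrow> I \<subseteq> J \<Longrightarrow> indep I"
  unfolding matroid_def by blast
lemma m_aug: "matroid E indep \<Longrightarrow> indep I \<Longrightarrow> indep J \<Longrightarrow> card I < card J
   \<Longrightarrow> \<exists>x\<in>J-I. indep (insert x I)"
  unfolding matroid_def by blast
lemma m_empty: "matroid E indep \<Longrightarrow> indep {}"
  unfolding matroid_def by blast
lemma m_fin: "matroid E indep \<Longrightarrow> indep I \<Longrightarrow> finite I"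
  using m_finite m_sub finite_subset by metis

lemma mrank_fin:
  assumes "matroid E indep" "X \<subseteq> E"
  shows "finite (card ` {I. I \<subseteq> X \<and> indep I})"
proof -
  have "finite X" using assms m_finite finite_subset by metis
  then have "finite {I. I \<subseteq> X \<and> indep I}" using finite_subset[of "{I. I \<subseteq> X \<and> indep I}" "Pow X"] by auto
  then show ?thesis by simp
qed

lemma mrank_ge:
  assumes "matroid E indep" "X \<subseteq> E" "indep I" "I \<subseteq> X"
  shows "card I \<le> mrank indep X"
  unfolding mrank_def using assms by (intro Max_ge[OF mrank_fin[OF assms(1,2)]]) auto

lemma mrank_ex:
  assumes "matroid E indep" "X \<subseteq> E"
  shows "\<exists>I. I \<subseteq> X \<and> indep I \<and> card I = mrank indep X"
proof -
  have "mrank indep X \<in> card ` {I. I \<subseteq> X \<and> indep I}"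
    unfolding mrank_def using mrank_fin[OF assms] m_empty[OF assms(1)]
    by (intro Max_in) auto
  then show ?thesis by auto
qed

lemma mrank_indep:
  assumes "matroid E indep" "indep X"
  shows "mrank indep X = card X"
proof -
  have XE: "X \<subseteq> E" using assms m_sub by blast
  have fX: "finite X" using assms m_fin by blast
  obtain I where "I \<subseteq> X" "indep I" "card I = mrank indep X" using mrank_ex[OF assms(1) XE] by blast
  then have "mrank indep X \<le> card X" using fX card_mono by metis
  moreover have "card X \<le> mrank indep X" using mrank_ge[OF assms(1) XE assms(2)] by simp
  ultimately show ?thesis by simp
qed

lemma m_ext:
  assumes M: "matroid E indep" and B: "indep B" "B \<subseteq> X"
  shows "indep I \<Longrightarrow> I \<subseteq> X \<Longrightarrow> card I \<le> card B \<Longrightarrow>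
     \<exists>J. I \<subseteq> J \<and> J \<subseteq> X \<and> indep J \<and> card J = card B"
proof (induction "card B - card I" arbitrary: I)
  case 0
  then show ?case by (intro exI[of _ I]) auto
next
  case (Suc n)
  then have "card I < card B" by simp
  then obtain x where x: "x \<in> B - I" "indep (insert x I)" using m_aug[OF M Suc(3) B(1)] by blast
  have fI: "finite I" using m_fin[OF M Suc(3)] .
  have c: "card (insert x I) = card I + 1" using x fI by simp
  have "\<exists>J. insert x I \<subseteq> J \<and> J \<subseteq> X \<and> indep J \<and> card J = card B"
    using Suc x c B by (intro Suc(1)) auto
  then show ?case by blast
qed

lemma key:
  assumes M: "matroid E indep" and B: "indep B" and e: "e \<notin> B" and dep: "\<not> indep (insert e B)"
  shows "\<not> indep (insert e (fdc indep e B))"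
proof
  let ?D = "fdc indep e B"
  assume ind: "indep (insert e ?D)"
  have fB: "finite B" using m_fin[OF M B] .
  have DB: "?D \<subseteq> B" unfolding fdc_def by auto
  have "?D \<noteq> B" using ind dep by auto
  then have "card ?D < card B" using DB fB by (meson psubset_card_mono psubsetI)
  moreover have "e \<notin> ?D" using DB e by auto
  moreover have "finite ?D" using DB fB finite_subset by blast
  ultimately have c: "card (insert e ?D) \<le> card B" by simp
  obtain J where J: "insert e ?D \<subseteq> J" "J \<subseteq> insert e B" "indep J" "card J = card B"
    using m_ext[OF M B, of "insert e B" "insert e ?D"] ind c DB by blast
  have "J \<noteq> insert e B" using J dep by auto
  then obtain b where b: "b \<in> insert e B" "b \<notin> J" using J by blast
  have bB: "b \<in> B" "b \<noteq> e" using b J by auto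
  have "J \<subseteq> insert e (B - {b})" using J b by auto
  moreover have "card (insert e (B - {b})) = card B"
    using bB e fB by (simp add: card_Diff_singleton) (metis Suc_pred card_gt_0_iff empty_iff)
  moreover have "finite (insert e (B - {b}))" using fB by simp
  ultimately have "J = insert e (B - {b})" using J(4) by (metis card_subset_eq)
  then have "b \<in> ?D" using J bB unfolding fdc_def by auto
  then show False using J b by auto
qed

lemma fdc_min:
  assumes M: "matroid E indep" and Z: "Z \<subseteq> B" and dep: "\<not> indep (insert e Z)"
  shows "fdc indep e B \<subseteq> Z"
proof
  fix b assume b: "b \<in> fdc indep e B"
  show "b \<in> Z"
  proof (rule ccontr)
    assume "b \<notin> Z"
    then have "insert e Z \<subseteq> insert e (B - {b})" using Z by auto
    moreover have "indep (insert e (B - {b}))" using b unfolding fdc_def by auto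
    ultimately show False using m_down[OF M] dep by blast
  qed
qed

theorem lemma3p2:
  fixes E :: "'a set" and indep :: "'a set \<Rightarrow> bool" and r t :: nat
  assumes "1 \<le> t" and "t \<le> r"
    and "matroid E indep"
    and "loopless E indep"
    and "matroid_rank E indep = r"
    and "\<not> (\<exists>X. claw E indep X \<and> card X = t + 1)"
  shows "card E \<ge> 2 * r - t \<and>
         (card E = 2 * r - t \<longrightarrow> direct_sum_circuits_coloops E indep (r - t))"
proof -
  note M = assms(3)
  have fE: "finite E" using m_finite[OF M] .
  obtain B where B: "B \<subseteq> E" "indep B" "card B = r"
    using mrank_ex[OF M, of E] assms(5) unfolding matroid_rank_def by blast
  have fB: "finite B" using B fE finite_subset by blast
  have maxB: "\<And>I. indep I \<Longrightarrow> card I \<le> r"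
    using mrank_ge[OF M, of E] m_sub[OF M] assms(5) unfolding matroid_rank_def by blast
  have depB: "\<And>e. e \<in> E - B \<Longrightarrow> \<not> indep (insert e B)"
  proof
    fix e assume "e \<in> E - B" "indep (insert e B)"
    then have "card (insert e B) = r + 1" using fB B by simp
    moreover have "card (insert e B) \<le> r" using maxB \<open>indep (insert e B)\<close> by blast
    ultimately show False by simp
  qed
  define D where "D e = fdc indep e B" for e
  have Ddep: "\<And>e. e \<in> E - B \<Longrightarrow> \<not> indep (insert e (D e))"
    unfolding D_def using key[OF M B(2)] depB by blast
  have Dsub: "\<And>e. D e \<subseteq> B" unfolding D_def fdc_def by auto
  have Dne: "\<And>e. e \<in> E - B \<Longrightarrow> D e \<noteq> {}"
  proof
    fix e assume e: "e \<in> E - B" "D e = {}"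
    then have "indep {e}" using assms(4) unfolding loopless_def by auto
    then show False using Ddep[OF e(1)] e(2) by simp
  qed
  have clawY: "claw E indep Y" if Y: "Y \<subseteq> B" "\<forall>e\<in>E-B. \<not> D e \<subseteq> Y" for Y
  proof -
    have iY: "indep Y" using m_down[OF M B(2) Y(1)] .
    have ins: "indep (insert y Y)" if y: "y \<in> E" "y \<notin> Y" for y
    proof (cases "y \<in> B")
      case True
      then show ?thesis using m_down[OF M B(2)] Y by auto
    next
      case False
      then obtain b where b: "b \<in> D y" "b \<notin> Y" using Y y by blast
      have "indep (insert y (B - {b}))" using b unfolding D_def fdc_def by auto
      moreover have "insert y Y \<subseteq> insert y (B - {b})" using b Y by auto
      ultimately show ?thesis using m_down[OF M] by blast
    qed
    have fY: "finite Y" using Y fB finite_subset by blast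
    have "mclosure E indep Y = Y"
    proof
      show "mclosure E indep Y \<subseteq> Y"
      proof
        fix y assume y: "y \<in> mclosure E indep Y"
        show "y \<in> Y"
        proof (rule ccontr)
          assume ny: "y \<notin> Y"
          have yE: "y \<in> E" using y unfolding mclosure_def by auto
          have "mrank indep (insert y Y) = card Y + 1"
            using mrank_indep[OF M ins[OF yE ny]] ny fY by simp
          moreover have "mrank indep Y = card Y" using mrank_indep[OF M iY] .
          ultimately show False using y unfolding mclosure_def by auto
        qed
      qed
    next
      show "Y \<subseteq> mclosure E indep Y"
        unfolding mclosure_def using Y B by (auto simp: insert_absorb)
    qed
    then show ?thesis unfolding claw_def flat_def using Y B iY by auto
  qed
  have P: "card (B - f ` (E - B)) \<le> t" if f: "\<forall>e\<in>E-B. f e \<in> D e" for f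
  proof (rule ccontr)
    assume "\<not> ?thesis"
    then have "t + 1 \<le> card (B - f ` (E - B))" by simp
    then obtain Y where Y: "Y \<subseteq> B - f ` (E - B)" "card Y = t + 1"
      by (rule obtain_subset_with_card_n)
    have "claw E indep Y" using Y f by (intro clawY) auto
    then show False using assms(6) Y by blast
  qed
  have cardE: "card E = r + card (E - B)"
    using B fB fE card_Un_disjoint[of B "E - B"] by (simp add: Un_absorb1)
  have "\<forall>e\<in>E-B. \<exists>x. x \<in> D e" using Dne by blast
  then obtain f where f: "\<forall>e\<in>E-B. f e \<in> D e" by metis
  have fin1: "finite (f ` (E - B))" using fE by simp
  have c1: "r - card (f ` (E - B)) \<le> t"
    using P[OF f] diff_card_le_card_Diff[OF fin1, of B] B(3) by linarith
  have c2: "card (f ` (E - B)) \<le> card (E - B)" using card_image_le fE by blast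
  have part1: "card E \<ge> 2 * r - t" using c1 c2 cardE by linarith
  moreover have "direct_sum_circuits_coloops E indep (r - t)" if eq: "card E = 2 * r - t"
  proof -
    have cEB: "card (E - B) = r - t" using eq cardE assms(2) by linarith
    have disj: "D e \<inter> D e' = {}" if ee: "e \<in> E - B" "e' \<in> E - B" "e \<noteq> e'" for e e'
    proof (rule ccontr)
      assume "D e \<inter> D e' \<noteq> {}"
      then obtain d where d: "d \<in> D e" "d \<in> D e'" by blast
      define f' where "f' x = (if x = e \<or> x = e' then d else f x)" for x
      have f': "\<forall>e\<in>E-B. f' e \<in> D e" using f d unfolding f'_def by auto
      have "\<not> inj_on f' (E - B)" using ee unfolding inj_on_def f'_def by auto
      then have "card (f' ` (E - B)) \<noteq> card (E - B)" using eq_card_imp_inj_on fE by blast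
      then have "card (f' ` (E - B)) < card (E - B)" using card_image_le fE
        by (metis finite_Diff le_neq_implies_less)
      moreover have "r - card (f' ` (E - B)) \<le> t"
        using P[OF f'] diff_card_le_card_Diff[of "f' ` (E - B)" B] fE B(3) by simp
      ultimately show False using cEB assms(2) by linarith
    qed
    have gen: "finite S \<Longrightarrow> S \<subseteq> E - B \<Longrightarrow> (\<forall>e\<in>S. g e \<in> D e) \<Longrightarrow>
       indep ((B - g ` S) \<union> S) \<and> card ((B - g ` S) \<union> S) = r" for S g
    proof (induction S rule: finite_induct)
      case empty
      then show ?case using B by simp
    next
      case (insert e S)
      let ?BS = "(B - g ` S) \<union> S"
      have IH: "indep ?BS" "card ?BS = r" using insert by auto
      have eEB: "e \<in> E - B" using insert by auto
      have ge: "g e \<in> D e" using insert by auto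
      have geB: "g e \<in> B" using ge Dsub by blast
      have eq1: "(B - g ` (insert e S)) \<union> insert e S = insert e (?BS - {g e})"
        using geB insert.prems(1) by auto
      have eBS: "e \<notin> ?BS" using insert eEB by auto
      have fBS: "finite ?BS" using fB insert by simp
      have depBS: "\<not> indep (insert e ?BS)"
      proof
        assume "indep (insert e ?BS)"
        moreover have "card (insert e ?BS) = r + 1" using eBS fBS IH by simp
        moreover have "card (insert e ?BS) \<le> r" using maxB calculation(1) by blast
        ultimately show False by simp
      qed
      have DeBS: "D e \<subseteq> ?BS"
      proof
        fix x assume x: "x \<in> D e"
        have "x \<notin> g ` S"
        proof
          assume "x \<in> g ` S"
          then obtain e' where e': "e' \<in> S" "x = g e'" by blast
          then have "x \<in> D e'" using insert by auto
          moreover have "e' \<noteq> e" using e' insert by auto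
          moreover have "e' \<in> E - B" using e' insert by auto
          ultimately show False using disj[OF eEB] x by blast
        qed
        then show "x \<in> ?BS" using x Dsub by blast
      qed
      have s1: "fdc indep e ?BS \<subseteq> D e" using fdc_min[OF M DeBS Ddep[OF eEB]] .
      have s2: "\<not> indep (insert e (fdc indep e ?BS))" using key[OF M IH(1) eBS depBS] .
      have s3: "D e \<subseteq> fdc indep e ?BS"
        unfolding D_def using fdc_min[OF M _ s2, of B] s1 Dsub by blast
      have gBS: "g e \<in> fdc indep e ?BS" using s3 ge by blast
      then have ind: "indep (insert e (?BS - {g e}))" unfolding fdc_def by auto
      have gin: "g e \<in> ?BS" using gBS unfolding fdc_def by auto
      have "card (insert e (?BS - {g e})) = r"
      proof -
        have "card ?BS > 0" using gin fBS card_gt_0_iff by blast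
        moreover have "e \<notin> ?BS - {g e}" using eBS by blast
        ultimately show ?thesis using gin fBS IH(2) by (simp add: card_Diff_singleton)
      qed
      then show ?case using ind eq1 by simp
    qed
    obtain h where h: "bij_betw h {..<r-t} (E - B)"
      using ex_bij_betw_nat_finite[of "E - B"] fE cEB by (auto simp: atLeast0LessThan)
    define C where "C i = insert (h i) (D (h i))" for i
    define K where "K = B - (\<Union>e\<in>E-B. D e)"
    have hE: "\<And>i. i < r - t \<Longrightarrow> h i \<in> E - B" using h bij_betwE by blast
    have hsurj: "E - B = h ` {..<r-t}" using h bij_betw_imp_surj_on by metis
    have charI: "indep I \<longleftrightarrow> I \<subseteq> E \<and> (\<forall>i<r-t. \<not> C i \<subseteq> I)" for I
    proof
      assume I: "indep I"
      have "\<not> C i \<subseteq> I" if "i < r - t" for i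
        using Ddep[OF hE[OF that]] m_down[OF M I] unfolding C_def by blast
      then show "I \<subseteq> E \<and> (\<forall>i<r-t. \<not> C i \<subseteq> I)" using m_sub[OF M I] by blast
    next
      assume I: "I \<subseteq> E \<and> (\<forall>i<r-t. \<not> C i \<subseteq> I)"
      have "\<forall>e\<in>E-B. \<exists>x. x \<in> insert e (D e) \<and> x \<notin> I"
      proof
        fix e assume "e \<in> E - B"
        then obtain i where "i < r - t" "e = h i" using hsurj by auto
        then show "\<exists>x. x \<in> insert e (D e) \<and> x \<notin> I" using I unfolding C_def by blast
      qed
      then obtain x where x: "\<forall>e\<in>E-B. x e \<in> insert e (D e) \<and> x e \<notin> I" by metis
      define S where "S = {e \<in> E - B. x e \<noteq> e}"
      have "indep ((B - x ` S) \<union> S)"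
        using gen[of S x] x fE unfolding S_def by auto
      moreover have "I \<subseteq> (B - x ` S) \<union> S"
      proof
        fix i assume i: "i \<in> I"
        show "i \<in> (B - x ` S) \<union> S"
        proof (cases "i \<in> B")
          case True
          then show ?thesis using x i unfolding S_def by auto
        next
          case False
          then have iEB: "i \<in> E - B" using i I by blast
          then have "x i \<notin> I" using x by blast
          then have "x i \<noteq> i" using i by (metis)
          then show ?thesis using iEB unfolding S_def by blast
        qed
      qed
      ultimately show "indep I" using m_down[OF M] by blast
    qed
    show ?thesis unfolding direct_sum_circuits_coloops_def
    proof (intro exI[of _ C] exI[of _ K] conjI allI impI)
      have CE: "C i \<subseteq> E" if "i < r - t" for i
        using hE[OF that] Dsub B unfolding C_def by blast
      have Cdisj: "C i \<inter> C j = {}" if "i < r - t" "j < r - t" "i \<noteq> j" for i j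
      proof -
        have "h i \<noteq> h j" using h that unfolding bij_betw_def inj_on_def by auto
        then show ?thesis using disj[OF hE hE, of i j] hE[OF that(1)] hE[OF that(2)] Dsub that
          unfolding C_def by blast
      qed
      show "C i \<inter> C j = {}" if "i < r - t" "j < r - t" "i \<noteq> j" for i j
        using Cdisj that by blast
      show "circuit E indep (C i)" if i: "i < r - t" for i
        unfolding circuit_def
      proof (intro conjI ballI)
        show "C i \<subseteq> E" using CE[OF i] .
        show "\<not> indep (C i)" using charI[of "C i"] i by blast
        fix y assume y: "y \<in> C i"
        have "\<not> C j \<subseteq> C i - {y}" if j: "j < r - t" for j
        proof (cases "j = i")
          case True then show ?thesis using y by blast
        next
          case False
          have "h j \<in> C j" unfolding C_def by blast
          then show ?thesis using Cdisj[OF i j] False by blast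
        qed
        then show "indep (C i - {y})" using charI[of "C i - {y}"] CE[OF i] by blast
      qed
      show "C i \<inter> K = {}" if "i < r - t" for i
        using hE[OF that] unfolding C_def K_def by blast
      show "E = (\<Union>i<r - t. C i) \<union> K"
      proof
        show "E \<subseteq> (\<Union>i<r - t. C i) \<union> K"
        proof
          fix y assume y: "y \<in> E"
          show "y \<in> (\<Union>i<r - t. C i) \<union> K"
          proof (cases "y \<in> B")
            case True
            show ?thesis
            proof (cases "y \<in> (\<Union>e\<in>E-B. D e)")
              case True
              then obtain e where "e \<in> E - B" "y \<in> D e" by blast
              then obtain i where "i < r - t" "e = h i" using hsurj by auto
              then show ?thesis using \<open>y \<in> D e\<close> unfolding C_def by blast
            next
              case False then show ?thesis using \<open>y \<in> B\<close> unfolding K_def by blast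
            qed
          next
            case False
            then obtain i where "i < r - t" "y = h i" using hsurj y by auto
            then show ?thesis unfolding C_def by blast
          qed
        qed
        show "(\<Union>i<r - t. C i) \<union> K \<subseteq> E" using CE B unfolding K_def by blast
      qed
      show "indep I \<longleftrightarrow> I \<subseteq> E \<and> (\<forall>i<r - t. \<not> C i \<subseteq> I)" for I using charI .
    qed
  qed
  ultimately show ?thesis by blast
qed

end
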